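(* Let $\Sigma$ be the set of linear functionals $\mu:\mathbb{C}[X]\to\mathbb{C}$ with $\mu(1)=1$, and $\Sigma_1^{\times}=\{\mu\in\Sigma:\mu(X)=1\}$. Then the map $$\operatorname{LOG}:=R^{-1}\circ\Big(z\tfrac{d}{dz}\log\Big)\circ S:\ (\Sigma_1^{\times},\boxtimes)\longrightarrow(\Sigma,\boxplus)$$ is a well-defined isomorphism of abelian groups (with inverse denoted $\operatorname{EXP}$).
   Context: For $\mu\in\Sigma$ write $m_n(\mu)=\mu(X^n)$. The Cauchy transform is $G_\mu(z)=\sum_{n\ge0}m_n(\mu)z^{-(n+1)}$; its compositional inverse has the form $G_\mu^{-1}(z)=\frac1z+\sum_{n\ge0}\alpha_nz^n$, and the $R$-transform is $R_\mu(z):=zG_\mu^{-1}(z)-1=\sum_{n\ge1}\alpha_{n-1}z^n\in z\mathbb{C}[[z]]$ (its coefficients are the free cumulants of $\mu$). For $\mu$ with $\mu(X)\ne0$ the moment series is $M_\mu(z)=\sum_{n\ge1}m_n(\mu)z^n$ and the $S$-transform is $S_\mu(z)=\frac{1+z}{z}M_\mu^{-1}(z)$, where $M_\mu^{-1}$ is the compositional inverse. $\boxplus$ and $\boxtimes$ denote Voiculescu's additive and multiplicative free convolution of distributions (the distributions of $a+b$, resp. $ab$, for free random variables $a,b$ with distributions $\mu,\nu$). Known (Voiculescu): $R:(\Sigma,\boxplus)\to(z\mathbb{C}[[z]],+)$ and $S:(\Sigma_1^{\times},\boxtimes)\to(1+z\mathbb{C}[[z]],\cdot)$ are group isomorphisms.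 The map $z\frac{d}{dz}\log$ sends $f\in 1+z\mathbb{C}[[z]]$ to $z f'(z)/f(z)\in z\mathbb{C}[[z]]$. *)

theory Defs
  imports "HOL-Computational_Algebra.Polynomial" "HOL-Computational_Algebra.Formal_Power_Series"
begin

definition Dist :: "(complex poly \<Rightarrow> complex) set" where
  "Dist = {\<mu>. (\<forall>p q. \<mu> (p + q) = \<mu> p + \<mu> q) \<and> (\<forall>c p. \<mu> (smult c p) = c * \<mu> p) \<and> \<mu> 1 = 1}"

definition Dist1x :: "(complex poly \<Rightarrow> complex) set" where
  "Dist1x = {\<mu> \<in> Dist. \<mu> [:0, 1:] = 1}"

definition mom :: "(complex poly \<Rightarrow> complex) \<Rightarrow> nat \<Rightarrow> complex" where
  "mom \<mu> n = \<mu> (monom 1 n)"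

definition functional_of_moments :: "(nat \<Rightarrow> complex) \<Rightarrow> complex poly \<Rightarrow> complex" where
  "functional_of_moments m p = (\<Sum>i\<le>degree p. coeff p i * m i)"

text \<open>A word is a list of blocks (b,k) meaning a^k if b, and b^k (second variable) otherwise.
  merge_blocks removes empty blocks and merges adjacent blocks of the same variable,
  producing an alternating word.\<close>
fun merge_blocks :: "(bool \<times> nat) list \<Rightarrow> (bool \<times> nat) list" where
  "merge_blocks [] = []"
| "merge_blocks ((b, k) # w) =
     (if k = 0 then merge_blocks w
      else (case merge_blocks w of
              [] \<Rightarrow> [(b, k)]
            | (c, l) # w' \<Rightarrow> (if c = b then (b, k + l) # w' else (b, k) # (c, l) # w')))"

definition block_mom :: "(nat \<Rightarrow> complex) \<Rightarrow> (nat \<Rightarrow> complex) \<Rightarrow> bool \<times> nat \<Rightarrow> complex" where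
  "block_mom m1 m2 bk = (if fst bk then m1 (snd bk) else m2 (snd bk))"

text \<open>Freeness: phi((a_1 - phi a_1)...(a_n - phi a_n)) = 0 for alternating a_i, n >= 1.
  Expanding gives the recursion below (on the number of alternating blocks);
  the first argument is fuel, which is always sufficient when started at the word length.\<close>
primrec free_state_aux :: "nat \<Rightarrow> (nat \<Rightarrow> complex) \<Rightarrow> (nat \<Rightarrow> complex) \<Rightarrow> (bool \<times> nat) list \<Rightarrow> complex" where
  "free_state_aux 0 m1 m2 w = 1"
| "free_state_aux (Suc f) m1 m2 w =
     (let v = merge_blocks w; n = length v in
      if n = 0 then 1
      else - (\<Sum>S \<in> Pow {..<n} - {{..<n}}.
                (\<Prod>i \<in> {..<n} - S. - block_mom m1 m2 (v ! i)) * free_state_aux f m1 m2 (nths v S)))"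

definition free_state :: "(nat \<Rightarrow> complex) \<Rightarrow> (nat \<Rightarrow> complex) \<Rightarrow> (bool \<times> nat) list \<Rightarrow> complex" where
  "free_state m1 m2 w = free_state_aux (length w) m1 m2 w"

text \<open>Additive free convolution: distribution of a+b, a,b free with distributions mu, nu.\<close>
definition free_add_conv :: "(complex poly \<Rightarrow> complex) \<Rightarrow> (complex poly \<Rightarrow> complex) \<Rightarrow> complex poly \<Rightarrow> complex" where
  "free_add_conv \<mu> \<nu> = functional_of_moments
     (\<lambda>n. \<Sum>w \<in> {w :: bool list. length w = n}. free_state (mom \<mu>) (mom \<nu>) (map (\<lambda>b. (b, 1)) w))"

definition free_mult_conv :: "(complex poly \<Rightarrow> complex) \<Rightarrow> (complex poly \<Rightarrow> complex) \<Rightarrow> complex poly \<Rightarrow> complex" where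
  "free_mult_conv \<mu> \<nu> = functional_of_moments
     (\<lambda>n. free_state (mom \<mu>) (mom \<nu>) (concat (replicate n [(True, 1), (False, 1)])))"

text \<open>With w = 1/z, G(z) = H(w) where H(w) = sum m_n w^(n+1). Hence G^{-1}(z) = 1/H^{-1}(z),
  and writing H^{-1}(z) = z U(z), we get R(z) = z G^{-1}(z) - 1 = 1/U(z) - 1.\<close>
definition R_transform :: "(complex poly \<Rightarrow> complex) \<Rightarrow> complex fps" where
  "R_transform \<mu> = inverse (fps_shift 1 (fps_inv (fps_X * Abs_fps (mom \<mu>)))) - 1"

definition moment_series :: "(complex poly \<Rightarrow> complex) \<Rightarrow> complex fps" where
  "moment_series \<mu> = Abs_fps (\<lambda>n. if n = 0 then 0 else mom \<mu> n)"

definition S_transform :: "(complex poly \<Rightarrow> complex) \<Rightarrow> complex fps" where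
  "S_transform \<mu> = (1 + fps_X) * fps_shift 1 (fps_inv (moment_series \<mu>))"

definition zdlog :: "complex fps \<Rightarrow> complex fps" where
  "zdlog f = fps_X * fps_deriv f * inverse f"

definition LOG :: "(complex poly \<Rightarrow> complex) \<Rightarrow> complex poly \<Rightarrow> complex" where
  "LOG \<mu> = the_inv_into Dist R_transform (zdlog (S_transform \<mu>))"

end

theory Submission
  imports Defs
begin

unbundle fps_syntax

lemma mom_fom: "mom (functional_of_moments m) n = m n"
proof -
  have "(\<Sum>i\<le>n. coeff (monom (1::complex) n) i * m i) = m n"
    by (subst sum.remove[of _ n]) (auto simp: coeff_monom)
  then show ?thesis by (simp add: mom_def functional_of_moments_def degree_monom_eq)
qed

lemma fom_Dist: assumes "m 0 = 1" shows "functional_of_moments m \<in> Dist"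
proof -
  have add: "functional_of_moments m (p + q) = functional_of_moments m p + functional_of_moments m q" for p q :: "complex poly"
  proof -
    let ?D = "max (degree p) (max (degree q) (degree (p+q)))"
    have e: "functional_of_moments m r = (\<Sum>i\<le>?D. coeff r i * m i)" if "degree r \<le> ?D" for r
      unfolding functional_of_moments_def
      by (rule sum.mono_neutral_left) (use that in \<open>auto simp: coeff_eq_0\<close>)
    show ?thesis
      by (subst (1 2 3) e) (auto simp: sum.distrib distrib_right)
  qed
  have sm: "functional_of_moments m (smult c p) = c * functional_of_moments m p" for c p
  proof (cases "c = 0")
    case True then show ?thesis by (simp add: functional_of_moments_def)
  next
    case False then show ?thesis
      by (simp add: functional_of_moments_def degree_smult_eq sum_distrib_left mult.assoc)
  qed
  have one: "functional_of_moments m 1 = 1" using assms by (simp add: functional_of_moments_def)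
  show ?thesis using add sm one by (auto simp: Dist_def)
qed

lemma Dist_fom: assumes "\<mu> \<in> Dist" shows "\<mu> = functional_of_moments (mom \<mu>)"
proof
  fix p :: "complex poly"
  have add: "\<mu> (p + q) = \<mu> p + \<mu> q" and sm: "\<mu> (smult c p) = c * \<mu> p" for p q c
    using assms by (auto simp: Dist_def)
  have sumr: "\<mu> (\<Sum>i\<in>A. f i) = (\<Sum>i\<in>A. \<mu> (f i))" if "finite A" for A and f :: "nat \<Rightarrow> complex poly"
    using that by (induction A rule: finite_induct) (auto simp: add sm[of 0 0, simplified])
  have "\<mu> p = \<mu> (\<Sum>i\<le>degree p. monom (coeff p i) i)" by (simp only: poly_as_sum_of_monoms)
  also have "\<dots> = (\<Sum>i\<le>degree p. \<mu> (monom (coeff p i) i))" by (rule sumr) simp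
  also have "\<dots> = (\<Sum>i\<le>degree p. coeff p i * mom \<mu> i)"
    by (intro sum.cong refl) (simp add: mom_def sm[symmetric] smult_monom)
  finally show "\<mu> p = functional_of_moments (mom \<mu>) p" by (simp add: functional_of_moments_def)
qed

lemma Dist_mom0: "\<mu> \<in> Dist \<Longrightarrow> mom \<mu> 0 = 1"
  by (simp add: Dist_def mom_def)

lemma Dist_eqI: "\<mu> \<in> Dist \<Longrightarrow> \<nu> \<in> Dist \<Longrightarrow> (\<And>n. mom \<mu> n = mom \<nu> n) \<Longrightarrow> \<mu> = \<nu>"
  by (metis Dist_fom ext)


lemma Xshift: "f $ 0 = 0 \<Longrightarrow> fps_X * fps_shift 1 f = (f :: 'a::comm_ring_1 fps)"
  by (intro fps_ext) auto
lemma XshiftS: "f $ 0 = 0 \<Longrightarrow> fps_X * fps_shift (Suc 0) f = (f :: 'a::comm_ring_1 fps)"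
  by (intro fps_ext) auto

lemma shiftX_S [simp]: "fps_shift (Suc 0) (fps_X * f) = (f :: 'a::comm_ring_1 fps)"
  by (intro fps_ext) simp

lemma fps_inv_nth0 [simp]: "fps_inv a $ 0 = 0"
  by (simp add: fps_inv_def)

lemma fps_inv_nth1: "fps_inv (a::'a::field fps) $ 1 = 1 / a $ 1"
  by (simp add: fps_inv_def)

lemma fps_inv_nthS: "fps_inv (a::'a::field fps) $ Suc 0 = 1 / a $ Suc 0"
  by (simp add: fps_inv_def)

lemma Xcancel: "fps_X * f = fps_X * g \<Longrightarrow> f = (g :: 'a::idom fps)"
  by simp

definition Mser :: "(complex poly \<Rightarrow> complex) \<Rightarrow> complex fps" where
  "Mser \<mu> = Abs_fps (mom \<mu>)"

definition Hs :: "(complex poly \<Rightarrow> complex) \<Rightarrow> complex fps" where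
  "Hs \<mu> = fps_X * Mser \<mu>"

lemma Hs0 [simp]: "Hs \<mu> $ 0 = 0" by (simp add: Hs_def)
lemma Hs1: "\<mu> \<in> Dist \<Longrightarrow> Hs \<mu> $ 1 = 1" by (simp add: Hs_def Mser_def Dist_mom0)
lemma HsS: "\<mu> \<in> Dist \<Longrightarrow> Hs \<mu> $ Suc 0 = 1" by (simp add: Hs_def Mser_def Dist_mom0)
lemma Mser0: "\<mu> \<in> Dist \<Longrightarrow> Mser \<mu> $ 0 = 1" by (simp add: Mser_def Dist_mom0)

lemma R_basic:
  assumes "\<mu> \<in> Dist"
  shows "R_transform \<mu> oo Hs \<mu> = Mser \<mu> - 1" and "R_transform \<mu> $ 0 = 0"
proof -
  define I where "I = fps_inv (Hs \<mu>)"
  define U where "U = fps_shift 1 I"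
  have h1: "Hs \<mu> $ 1 = 1" using Hs1[OF assms] .
  have IH: "I oo Hs \<mu> = fps_X" unfolding I_def by (rule fps_inv) (simp_all add: h1[simplified])
  have I0: "I $ 0 = 0" by (simp add: I_def)
  have IU: "I = fps_X * U" unfolding U_def using Xshift[OF I0] by simp
  have U0: "U $ 0 = 1" by (simp add: U_def I_def fps_inv_nthS HsS[OF assms])
  have "fps_X = Hs \<mu> * (U oo Hs \<mu>)" using IH unfolding IU
    by (simp add: fps_compose_mult_distrib)
  then have "fps_X * 1 = fps_X * (Mser \<mu> * (U oo Hs \<mu>))" by (simp add: Hs_def mult.assoc)
  then have MU: "Mser \<mu> * (U oo Hs \<mu>) = 1" by (metis Xcancel)
  have R: "R_transform \<mu> = inverse U - 1" by (simp add: R_transform_def U_def I_def Hs_def Mser_def)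
  have "R_transform \<mu> oo Hs \<mu> = inverse (U oo Hs \<mu>) - 1"
    unfolding R by (simp add: fps_compose_sub_distrib fps_inverse_compose U0)
  also have "inverse (U oo Hs \<mu>) = Mser \<mu>"
    using MU by (metis fps_inverse_unique mult.commute)
  finally show "R_transform \<mu> oo Hs \<mu> = Mser \<mu> - 1" .
  show "R_transform \<mu> $ 0 = 0" unfolding R by (simp add: U0)
qed

lemma R_inj: "inj_on R_transform Dist"
proof (rule inj_onI)
  fix \<mu> \<nu> assume m: "\<mu> \<in> Dist" and n: "\<nu> \<in> Dist" and eq: "R_transform \<mu> = R_transform \<nu>"
  have "R_transform \<mu> oo Hs \<mu> = Mser \<mu> - 1" "R_transform \<nu> oo Hs \<nu> = Mser \<nu> - 1"
    using R_basic m n by auto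
  define U1 where "U1 = fps_shift 1 (fps_inv (Hs \<mu>))"
  define U2 where "U2 = fps_shift 1 (fps_inv (Hs \<nu>))"
  have U10: "U1 $ 0 \<noteq> 0" "U2 $ 0 \<noteq> 0" by (simp_all add: U1_def U2_def fps_inv_nthS HsS m n)
  have "inverse U1 = inverse U2" using eq by (simp add: R_transform_def U1_def U2_def Hs_def Mser_def)
  then have "U1 = U2" by (metis U10 fps_inverse_idempotent)
  then have "fps_X * U1 = fps_X * U2" by simp
  then have "fps_inv (Hs \<mu>) = fps_inv (Hs \<nu>)" unfolding U1_def U2_def by (simp add: XshiftS)
  then have "Hs \<mu> = Hs \<nu>"
    by (metis fps_inv_idempotent Hs0 Hs1 m n one_neq_zero)
  then have "Mser \<mu> = Mser \<nu>" by (simp add: Hs_def)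
  then have "mom \<mu> k = mom \<nu> k" for k by (metis Mser_def fps_nth_Abs_fps)
  then show "\<mu> = \<nu>" using m n by (intro Dist_eqI)
qed

lemma R_surj:
  assumes f0: "f $ 0 = 0"
  shows "\<exists>\<mu>\<in>Dist. R_transform \<mu> = f"
proof -
  define U where "U = inverse (1 + f)"
  define J where "J = fps_X * U"
  have U0: "U $ 0 = 1" by (simp add: U_def f0)
  have J0: "J $ 0 = 0" and J1: "J $ 1 = 1" by (simp_all add: J_def U0)
  define H where "H = fps_inv J"
  have H0: "H $ 0 = 0" and H1: "H $ 1 = 1" by (simp_all add: H_def fps_inv_nthS J1[simplified])
  define \<mu> where "\<mu> = functional_of_moments (\<lambda>n. H $ Suc n)"
  have mom0: "H $ Suc 0 = 1" using H1 by simp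
  have mD: "\<mu> \<in> Dist" unfolding \<mu>_def by (rule fom_Dist) (simp add: mom0)
  have "fps_X * Abs_fps (mom \<mu>) = H"
    by (intro fps_ext) (simp add: \<mu>_def mom_fom H0)
  moreover have "fps_inv H = J" unfolding H_def by (rule fps_inv_idempotent) (simp_all add: J0 J1[simplified])
  ultimately have "R_transform \<mu> = inverse (fps_shift 1 J) - 1"
    by (simp add: R_transform_def)
  also have "fps_shift 1 J = U" by (simp add: J_def)
  also have "inverse U = 1 + f" by (simp add: U_def f0)
  finally show ?thesis using mD by auto
qed


lemma monomX: "monom (1::complex) (Suc 0) = [:0, 1:]"
  by (simp add: monom_Suc)

lemma zd_mult:
  assumes "f $ 0 \<noteq> 0" "g $ 0 \<noteq> 0"
  shows "zdlog (f * g) = zdlog f + zdlog (g :: complex fps)"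
proof -
  have fi: "f * inverse f = 1" and gi: "g * inverse g = 1" using assms by (auto intro: inverse_mult_eq_1')
  have "zdlog (f * g) = fps_X * (fps_deriv f * g + f * fps_deriv g) * (inverse f * inverse g)"
    by (simp add: zdlog_def fps_inverse_mult)
  also have "\<dots> = fps_X * fps_deriv f * inverse f * (g * inverse g) + fps_X * fps_deriv g * inverse g * (f * inverse f)"
    by (simp add: algebra_simps)
  finally show ?thesis by (simp add: fi gi zdlog_def)
qed

lemma zd0: "(zdlog f) $ 0 = 0"
  by (simp add: zdlog_def mult.assoc)

lemma zd_inj:
  assumes f0: "f $ 0 = 1" and g0: "g $ 0 = 1" and eq: "zdlog f = zdlog (g :: complex fps)"
  shows "f = g"
proof -
  have fi: "inverse f * f = 1" and gi: "inverse g * g = 1" using f0 g0 by auto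
  from eq have "fps_X * (fps_deriv f * inverse f) = fps_X * (fps_deriv g * inverse g)"
    by (simp add: zdlog_def mult.assoc)
  then have e: "fps_deriv f * inverse f = fps_deriv g * inverse g" by simp
  have "fps_deriv f * g = fps_deriv g * f"
  proof -
    have "fps_deriv f * g = fps_deriv f * inverse f * f * g" using fi by (simp add: mult.assoc)
    also have "\<dots> = fps_deriv g * inverse g * g * f" using e by (simp add: algebra_simps)
    also have "\<dots> = fps_deriv g * f" using gi by (simp add: mult.assoc)
    finally show ?thesis .
  qed
  moreover have "fps_deriv (f * inverse g) = fps_deriv f * inverse g - f * fps_deriv g * (inverse g)^2"
    using g0 by (simp add: fps_inverse_deriv algebra_simps)
  moreover have "fps_deriv f * inverse g = fps_deriv f * g * (inverse g)^2"
  proof -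
    have "fps_deriv f * g * (inverse g)^2 = fps_deriv f * (inverse g * g) * inverse g"
      by (simp add: power2_eq_square algebra_simps)
    also have "\<dots> = fps_deriv f * inverse g" using gi by simp
    finally show ?thesis by metis
  qed
  ultimately have "fps_deriv (f * inverse g) = 0" by (simp add: algebra_simps)
  then have "f * inverse g = fps_const ((f * inverse g) $ 0)" by (simp only: fps_deriv_eq_0_iff)
  also have "(f * inverse g) $ 0 = 1" using f0 g0 by simp
  finally have fi1: "f * inverse g = 1" by simp
  have "f = f * (inverse g * g)" using gi by simp
  also have "\<dots> = (f * inverse g) * g" by (simp only: mult.assoc)
  also have "\<dots> = g" using fi1 by simp
  finally show ?thesis .
qed

lemma zd_surj:
  assumes h0: "h $ 0 = (0::complex)"
  shows "\<exists>f. f $ 0 = 1 \<and> zdlog f = h"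
proof -
  define p where "p = fps_integral0 (fps_shift 1 h)"
  have p0: "p $ 0 = 0" by (simp add: p_def)
  define f where "f = fps_exp 1 oo p"
  have f0: "f $ 0 = 1" by (simp add: f_def)
  have dp: "fps_deriv p = fps_shift 1 h" by (simp add: p_def fps_deriv_fps_integral)
  have "fps_deriv f = (fps_deriv (fps_exp 1) oo p) * fps_deriv p"
    unfolding f_def by (rule fps_compose_deriv[OF p0])
  also have "fps_deriv (fps_exp (1::complex)) = fps_exp 1" by simp
  finally have "fps_deriv f = f * fps_shift 1 h" by (simp add: f_def dp)
  then have "zdlog f = fps_X * fps_shift 1 h * (f * inverse f)" by (simp add: zdlog_def algebra_simps)
  also have "f * inverse f = 1" using f0 by (auto intro: inverse_mult_eq_1')
  finally have "zdlog f = h" using XshiftS[OF h0] by simp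
  then show ?thesis using f0 by blast
qed

lemma ms_nth: "moment_series \<mu> $ n = (if n = 0 then 0 else mom \<mu> n)"
  by (simp add: moment_series_def)

lemma Dist1x_D: "\<mu> \<in> Dist1x \<Longrightarrow> \<mu> \<in> Dist" "\<mu> \<in> Dist1x \<Longrightarrow> mom \<mu> 1 = 1"
  by (auto simp: Dist1x_def mom_def monomX)

lemma ms0 [simp]: "moment_series \<mu> $ 0 = 0" by (simp add: moment_series_def)
lemma ms1: "\<mu> \<in> Dist1x \<Longrightarrow> moment_series \<mu> $ Suc 0 = 1"
  using Dist1x_D(2) by (simp add: moment_series_def)

lemma S_X: assumes "\<mu> \<in> Dist1x"
  shows "fps_X * S_transform \<mu> = (1 + fps_X) * fps_inv (moment_series \<mu>)"
proof -
  have "fps_X * S_transform \<mu> = (1 + fps_X) * (fps_X * fps_shift 1 (fps_inv (moment_series \<mu>)))"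
    unfolding S_transform_def by (simp only: mult.left_commute)
  also have "\<dots> = (1 + fps_X) * fps_inv (moment_series \<mu>)" by (simp add: XshiftS)
  finally show ?thesis .
qed

lemma S0: "\<mu> \<in> Dist1x \<Longrightarrow> S_transform \<mu> $ 0 = 1"
  by (simp add: S_transform_def fps_inv_def ms1)

lemma ms_inv_inv: "\<mu> \<in> Dist1x \<Longrightarrow> fps_inv (fps_inv (moment_series \<mu>)) = moment_series \<mu>"
  by (rule fps_inv_idempotent) (simp_all add: ms1)

lemma onepX_nz: "(1 + fps_X :: complex fps) \<noteq> 0"
proof
  assume "(1 + fps_X :: complex fps) = 0"
  then have "(1 + fps_X :: complex fps) $ 0 = 0" by simp
  then show False by simp
qed

lemma S_inj: "inj_on S_transform Dist1x"
proof (rule inj_onI)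
  fix \<mu> \<nu> assume m: "\<mu> \<in> Dist1x" and n: "\<nu> \<in> Dist1x" and eq: "S_transform \<mu> = S_transform \<nu>"
  have "(1 + fps_X) * fps_inv (moment_series \<mu>) = (1 + fps_X) * fps_inv (moment_series \<nu>)"
    using S_X[OF m] S_X[OF n] eq by metis
  then have "fps_inv (moment_series \<mu>) = fps_inv (moment_series \<nu>)" using onepX_nz by (metis mult_left_cancel)
  then have "moment_series \<mu> = moment_series \<nu>" using ms_inv_inv m n by metis
  then have e: "moment_series \<mu> $ k = moment_series \<nu> $ k" for k by simp
  have "mom \<mu> k = mom \<nu> k" for k
    using e[of k] Dist_mom0 Dist1x_D(1) m n by (cases "k = 0") (auto simp: ms_nth)
  then show "\<mu> = \<nu>" using m n Dist1x_D(1) by (intro Dist_eqI)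
qed

lemma S_surj:
  assumes s0: "s $ 0 = (1::complex)"
  shows "\<exists>\<mu>\<in>Dist1x. S_transform \<mu> = s"
proof -
  define q where "q = s * inverse (1 + fps_X)"
  define t where "t = fps_X * q"
  have t0: "t $ 0 = 0" and t1: "t $ Suc 0 = 1" by (simp_all add: t_def q_def s0)
  define \<psi> where "\<psi> = fps_inv t"
  have p0: "\<psi> $ 0 = 0" and p1: "\<psi> $ Suc 0 = 1" by (simp_all add: \<psi>_def fps_inv_def t1)
  define \<mu> where "\<mu> = functional_of_moments (\<lambda>n. if n = 0 then 1 else \<psi> $ n)"
  have mD: "\<mu> \<in> Dist" unfolding \<mu>_def by (rule fom_Dist) simp
  have m1: "mom \<mu> 1 = 1" by (simp add: \<mu>_def mom_fom p1)
  have mD1: "\<mu> \<in> Dist1x" using mD m1 by (simp add: Dist1x_def mom_def monomX)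
  have ms: "moment_series \<mu> = \<psi>" by (intro fps_ext) (simp add: ms_nth \<mu>_def mom_fom p0)
  have "fps_inv \<psi> = t" unfolding \<psi>_def by (rule fps_inv_idempotent) (simp_all add: t0 t1)
  then have "S_transform \<mu> = (1 + fps_X) * q" by (simp add: S_transform_def ms t_def)
  also have "\<dots> = s" unfolding q_def
    by (simp add: mult.commute[of s] mult.assoc[symmetric] inverse_mult_eq_1')
  finally show ?thesis using mD1 by blast
qed


definition tpoly :: "(nat \<Rightarrow> complex) \<Rightarrow> nat \<Rightarrow> complex fps" where
  "tpoly c N = (\<Sum>j<N. fps_const (c j) * fps_X ^ j)"

lemma tpoly_nth: "tpoly c N $ i = (if i < N then c i else 0)"
proof -
  have "tpoly c N $ i = (\<Sum>j<N. (if j = i then c j else 0))"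
    unfolding tpoly_def fps_sum_nth by (intro sum.cong) (auto simp: fps_X_power_nth)
  also have "\<dots> = (if i < N then c i else 0)"
    by simp
  finally show ?thesis .
qed

lemma tpoly_compose: "b $ 0 = 0 \<Longrightarrow> tpoly c N oo b = (\<Sum>j<N. fps_const (c j) * b ^ j)"
  by (simp add: tpoly_def fps_compose_sum_distrib fps_compose_mult_distrib fps_X_power_compose)

lemma compose_agree:
  assumes "\<And>i. i \<le> n \<Longrightarrow> a $ i = a' $ i"
  shows "(a oo b) $ n = (a' oo b) $ n"
  using assms by (simp add: fps_compose_nth)

lemma mult_agree:
  assumes "\<And>i. i \<le> n \<Longrightarrow> f $ i = g $ i"
  shows "(h * f) $ n = (h * g) $ n"
  using assms by (simp add: fps_mult_nth)

lemma power_low: "b $ 0 = 0 \<Longrightarrow> n < k \<Longrightarrow> (h * b ^ k) $ n = 0"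
  by (simp add: fps_mult_nth startsby_zero_power_prefix)

lemma trunc_sum:
  fixes a b h :: "complex fps"
  assumes b0: "b $ 0 = 0" and nN: "n < N"
  shows "(h * (a oo b)) $ n = (\<Sum>j<N. a $ j * (h * b ^ j) $ n)"
proof -
  have "(h * (a oo b)) $ n = (h * (tpoly (\<lambda>j. a $ j) N oo b)) $ n"
    by (intro mult_agree compose_agree) (use nN in \<open>simp add: tpoly_nth\<close>)
  also have "\<dots> = (\<Sum>j<N. a $ j * (h * b ^ j) $ n)"
    unfolding tpoly_compose[OF b0] sum_distrib_left fps_sum_nth
    by (intro sum.cong refl) (simp only: mult.left_commute[of h] fps_mult_left_const_nth)
  finally show ?thesis .
qed

definition Qs :: "(complex poly \<Rightarrow> complex) \<Rightarrow> nat \<Rightarrow> complex fps" where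
  "Qs \<mu> m = Mser \<mu> * Hs \<mu> ^ m"

lemma Qs0: assumes "\<mu> \<in> Dist" shows "Qs \<mu> m $ 0 = (if m = 0 then 1 else 0)"
  using assms by (cases m) (simp_all add: Qs_def Mser0 Hs_def)

lemma Qrec:
  assumes mu: "\<mu> \<in> Dist" and nN: "n < N"
  shows "Qs \<mu> m $ Suc n = (if m = 0 then 0 else Qs \<mu> (m - 1) $ n)
           + (\<Sum>j<N. R_transform \<mu> $ Suc j * Qs \<mu> (m + j) $ n)"
proof -
  let ?M = "Mser \<mu>" and ?H = "Hs \<mu>" and ?R = "R_transform \<mu>"
  have HX: "?H ^ Suc k = fps_X * Qs \<mu> k" for k by (simp add: Hs_def Qs_def algebra_simps)
  have "Qs \<mu> m = ?H ^ m * (1 + (?R oo ?H))" using R_basic(1)[OF mu] by (simp add: Qs_def)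
  then have "Qs \<mu> m = ?H ^ m + ?H ^ m * (?R oo ?H)" by (simp add: algebra_simps)
  then have e: "Qs \<mu> m $ Suc n = ?H ^ m $ Suc n + (?H ^ m * (?R oo ?H)) $ Suc n" by simp
  have e1: "?H ^ m $ Suc n = (if m = 0 then 0 else Qs \<mu> (m - 1) $ n)"
    by (cases m) (simp_all add: HX del: power_Suc)
  have "(?H ^ m * (?R oo ?H)) $ Suc n = (\<Sum>j<Suc N. ?R $ j * (?H ^ m * ?H ^ j) $ Suc n)"
    by (rule trunc_sum) (use nN in auto)
  also have "\<dots> = (\<Sum>j<N. ?R $ Suc j * (?H ^ m * ?H ^ Suc j) $ Suc n)"
    by (subst sum.lessThan_Suc_shift) (simp add: R_basic(2)[OF mu])
  also have "\<dots> = (\<Sum>j<N. ?R $ Suc j * Qs \<mu> (m + j) $ n)"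
  proof (intro sum.cong refl)
    fix j
    have "?H ^ m * ?H ^ Suc j = ?H ^ Suc (m + j)" by (simp add: power_add[symmetric])
    then show "?R $ Suc j * (?H ^ m * ?H ^ Suc j) $ Suc n = ?R $ Suc j * Qs \<mu> (m + j) $ n"
      by (simp only: HX fps_X_mult_nth) simp
  qed
  finally show ?thesis using e e1 by simp
qed

lemma Qs_low: assumes "\<mu> \<in> Dist" "n < m" shows "Qs \<mu> m $ n = 0"
  unfolding Qs_def by (rule power_low) (use assms in auto)


type_synonym vec = "bool list \<Rightarrow> complex"

definition vac :: vec where "vac w = (if w = [] then 1 else 0)"

definition Xop :: "nat \<Rightarrow> (nat \<Rightarrow> complex) \<Rightarrow> bool \<Rightarrow> vec \<Rightarrow> vec" where
  "Xop N k c v w = (case w of [] \<Rightarrow> 0 | d # w' \<Rightarrow> if d = c then v w' else 0)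
                  + (\<Sum>j<N. k (Suc j) * v (replicate j c @ w))"

definition lin :: "(vec \<Rightarrow> vec) \<Rightarrow> bool" where
  "lin T \<longleftrightarrow> (\<forall>a b u v. T (\<lambda>w. a * u w + b * v w) = (\<lambda>w. a * T u w + b * T v w))"

lemma lin_Xop: "lin (Xop N k c)"
  unfolding lin_def
  by (auto simp: Xop_def fun_eq_iff sum.distrib sum_distrib_left algebra_simps split: list.splits)

lemma lin_comp: "lin S \<Longrightarrow> lin T \<Longrightarrow> lin (S \<circ> T)"
  by (simp add: lin_def)

lemma lin_id: "lin id" by (simp add: lin_def)

lemma lin_funpow: "lin T \<Longrightarrow> lin (T ^^ n)"
  by (induction n) (simp_all add: lin_id lin_comp)

lemma lin_zero: "lin T \<Longrightarrow> T (\<lambda>w. 0) = (\<lambda>w. 0)"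
  unfolding lin_def by (erule allE[of _ 0], erule allE[of _ 0]) simp

lemma lin_scale: "lin T \<Longrightarrow> T (\<lambda>w. a * u w) = (\<lambda>w. a * T u w)"
  unfolding lin_def by (erule allE[of _ a], erule allE[of _ 0]) simp

lemma lin_add: "lin T \<Longrightarrow> T (\<lambda>w. u w + v w) = (\<lambda>w. T u w + T v w)"
  unfolding lin_def by (erule allE[of _ 1], erule allE[of _ 1]) simp

lemma lin_diff: "lin T \<Longrightarrow> T (\<lambda>w. u w - a * v w) = (\<lambda>w. T u w - a * T v w)"
  unfolding lin_def by (erule allE[of _ 1], erule allE[of _ "-a"]) simp

lemma lin_sum: assumes "lin T" "finite A"
  shows "T (\<lambda>w. \<Sum>i\<in>A. f i w) = (\<lambda>w. \<Sum>i\<in>A. T (f i) w)"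
  using assms(2)
proof (induction A rule: finite_induct)
  case empty then show ?case using lin_zero[OF assms(1)] by simp
next
  case (insert x F)
  then show ?case using lin_add[OF assms(1), of "f x" "\<lambda>w. \<Sum>i\<in>F. f i w"] by simp
qed

lemma lin_sum_scale: assumes "lin T" "finite A"
  shows "T (\<lambda>w. \<Sum>i\<in>A. a i * f i w) = (\<lambda>w. \<Sum>i\<in>A. a i * T (f i) w)"
  using lin_sum[OF assms, of "\<lambda>i w. a i * f i w"] lin_scale[OF assms(1)] by simp

definition headnot :: "bool \<Rightarrow> bool list \<Rightarrow> bool" where
  "headnot c w \<longleftrightarrow> w = [] \<or> hd w \<noteq> c"

definition actseq :: "nat \<Rightarrow> (nat \<Rightarrow> complex) \<Rightarrow> (nat \<Rightarrow> complex) \<Rightarrow> nat \<Rightarrow> complex" where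
  "actseq N k d j = (if j = 0 then 0 else d (j - 1)) + (\<Sum>i<N. k (Suc i) * d (i + j))"

lemma Xop_act:
  assumes "headnot c w"
  shows "Xop N k c v (replicate j c @ w) = actseq N k (\<lambda>i. v (replicate i c @ w)) j"
proof (cases j)
  case 0
  have "(case w of [] \<Rightarrow> 0 | d # w' \<Rightarrow> if d = c then v w' else 0) = 0"
    using assms by (cases w) (auto simp: headnot_def)
  then show ?thesis using 0 by (simp add: Xop_def actseq_def)
next
  case (Suc j')
  have r: "replicate i c @ c # replicate j' c @ w = c # replicate (i + j') c @ w" for i
    by (simp add: replicate_app_Cons_same replicate_add)
  show ?thesis using Suc by (simp add: Xop_def actseq_def r)
qed

lemma Xop_iter:
  assumes "headnot c w"
  shows "(Xop N k c ^^ n) v (replicate j c @ w) = (actseq N k ^^ n) (\<lambda>i. v (replicate i c @ w)) j"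
proof (induction n arbitrary: j)
  case 0 then show ?case by simp
next
  case (Suc n)
  have "(Xop N k c ^^ Suc n) v (replicate j c @ w) = Xop N k c ((Xop N k c ^^ n) v) (replicate j c @ w)"
    by simp
  also have "\<dots> = actseq N k (\<lambda>i. (Xop N k c ^^ n) v (replicate i c @ w)) j"
    by (rule Xop_act[OF assms])
  also have "\<dots> = actseq N k ((actseq N k ^^ n) (\<lambda>i. v (replicate i c @ w))) j"
    using Suc by simp
  finally show ?case by simp
qed

lemma actseq_scale: "(actseq N k ^^ n) (\<lambda>i. a * d i) = (\<lambda>i. a * (actseq N k ^^ n) d i)"
proof (induction n)
  case 0 then show ?case by simp
next
  case (Suc n)
  then show ?case by (simp add: actseq_def fun_eq_iff sum_distrib_left algebra_simps)
qed

lemma headnot_Nil [simp]: "headnot c []" by (simp add: headnot_def)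

lemma Xop_centered:
  assumes hv: "\<And>u. v u \<noteq> 0 \<Longrightarrow> headnot c u" and w: "headnot c w"
  shows "(Xop N k c ^^ n) v w = (Xop N k c ^^ n) vac [] * v w"
proof -
  have d: "(\<lambda>i. v (replicate i c @ w)) = (\<lambda>i. v w * (if i = 0 then 1 else 0))"
  proof
    fix i show "v (replicate i c @ w) = v w * (if i = 0 then 1 else 0)"
    proof (cases i)
      case (Suc i')
      then have "\<not> headnot c (replicate i c @ w)" by (simp add: headnot_def)
      then show ?thesis using hv Suc by fastforce
    qed simp
  qed
  have dv: "(\<lambda>i. vac (replicate i c @ [])) = (\<lambda>i. (if i = 0 then 1 else 0))"
    by (auto simp: vac_def fun_eq_iff)
  have "(Xop N k c ^^ n) v w = (Xop N k c ^^ n) v (replicate 0 c @ w)" by simp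
  also have "\<dots> = v w * (actseq N k ^^ n) (\<lambda>i. if i = 0 then 1 else 0) 0"
    unfolding Xop_iter[OF w] d actseq_scale by simp
  also have "(actseq N k ^^ n) (\<lambda>i. if i = 0 then 1 else 0) 0 = (Xop N k c ^^ n) vac (replicate 0 c @ [])"
    unfolding Xop_iter[OF headnot_Nil] dv ..
  finally show ?thesis by simp
qed


fun alt :: "(bool \<times> nat) list \<Rightarrow> bool" where
  "alt [] = True"
| "alt [b] = True"
| "alt (b1 # b2 # r) = (fst b1 \<noteq> fst b2 \<and> alt (b2 # r))"

lemma alt_hd_cong: "alt ((b, x) # r) = alt ((b, y) # r)"
  by (cases r) auto

lemma alt_merge: "alt (merge_blocks w)"
proof (induction w rule: merge_blocks.induct)
  case 1 then show ?case by simp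
next
  case (2 b k w)
  show ?case
  proof (cases "k = 0")
    case True then show ?thesis using 2 by simp
  next
    case False
    show ?thesis
    proof (cases "merge_blocks w")
      case Nil then show ?thesis using False by simp
    next
      case (Cons x w')
      obtain c l where x: "x = (c, l)" by (cases x)
      have a: "alt ((c, l) # w')" using 2 False Cons x by simp
      show ?thesis using False Cons x a alt_hd_cong[of b "k + l" w' l] by auto
    qed
  qed
qed

lemma sum_merge: "sum_list (map snd (merge_blocks w)) = sum_list (map snd w)"
proof (induction w rule: merge_blocks.induct)
  case 1 then show ?case by simp
next
  case (2 b k w)
  show ?case
  proof (cases "k = 0")
    case True then show ?thesis using 2(1) by simp
  next
    case False
    then show ?thesis using 2(2)[OF False] by (cases "merge_blocks w") auto
  qed
qed

lemma length_merge: "length (merge_blocks w) \<le> length w"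
proof (induction w rule: merge_blocks.induct)
  case 1 then show ?case by simp
next
  case (2 b k w)
  show ?case
  proof (cases "k = 0")
    case True then show ?thesis using 2(1) by simp
  next
    case False
    then show ?thesis using 2(2)[OF False] by (cases "merge_blocks w") auto
  qed
qed

lemma sum_nths: fixes v :: "(bool \<times> nat) list" shows "sum_list (map snd (nths v S)) \<le> sum_list (map snd v)"
proof (induction v arbitrary: S)
  case Nil then show ?case by simp
next
  case (Cons x v)
  have "sum_list (map snd (nths v {j. Suc j \<in> S})) \<le> sum_list (map snd v)" by (rule Cons)
  then show ?case by (auto simp: nths_Cons)
qed

lemma pow_split:
  fixes F :: "nat set \<Rightarrow> 'a::comm_monoid_add"
  shows "(\<Sum>S\<in>Pow {..<Suc n}. F S) = (\<Sum>S\<in>Pow {..<n}. F (Suc ` S)) + (\<Sum>S\<in>Pow {..<n}. F (insert 0 (Suc ` S)))"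
proof -
  define A1 where "A1 = (\<lambda>S. Suc ` S) ` Pow {..<n}"
  define A2 where "A2 = (\<lambda>S. insert 0 (Suc ` S)) ` Pow {..<n}"
  have eq: "Pow {..<Suc n} = A1 \<union> A2"
  proof (intro equalityI subsetI)
    fix S assume "S \<in> Pow {..<Suc n}"
    then have S: "S \<subseteq> {..<Suc n}" by simp
    define T where "T = {i. Suc i \<in> S}"
    have T: "T \<in> Pow {..<n}" using S by (auto simp: T_def)
    have "S - {0} = Suc ` T"
      by (auto simp: T_def image_iff) (metis not0_implies_Suc)
    then show "S \<in> A1 \<union> A2"
    proof (cases "0 \<in> S")
      case True
      then have "S = insert 0 (Suc ` T)" using \<open>S - {0} = Suc ` T\<close> by blast
      then show ?thesis using T by (auto simp: A2_def)
    next
      case False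
      then have "S = Suc ` T" using \<open>S - {0} = Suc ` T\<close> by blast
      then show ?thesis using T by (auto simp: A1_def)
    qed
  next
    fix S assume "S \<in> A1 \<union> A2"
    then show "S \<in> Pow {..<Suc n}" by (auto simp: A1_def A2_def)
  qed
  have disj: "A1 \<inter> A2 = {}" by (auto simp: A1_def A2_def)
  have i1: "inj_on (\<lambda>S. Suc ` S) (Pow {..<n})"
    by (rule inj_onI) (simp add: inj_image_eq_iff)
  have i2: "inj_on (\<lambda>S. insert 0 (Suc ` S)) (Pow {..<n})"
  proof (rule inj_onI)
    fix S T :: "nat set" assume "insert 0 (Suc ` S) = insert 0 (Suc ` T)"
    then have "Suc ` S = Suc ` T" by (metis Diff_insert_absorb image_iff nat.distinct(1))
    then show "S = T" by (simp add: inj_image_eq_iff)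
  qed
  have "(\<Sum>S\<in>Pow {..<Suc n}. F S) = sum F A1 + sum F A2"
    unfolding eq by (rule sum.union_disjoint) (auto simp: A1_def A2_def disj)
  also have "sum F A1 = (\<Sum>S\<in>Pow {..<n}. F (Suc ` S))"
    unfolding A1_def by (rule sum.reindex[OF i1, unfolded comp_def])
  also have "sum F A2 = (\<Sum>S\<in>Pow {..<n}. F (insert 0 (Suc ` S)))"
    unfolding A2_def by (rule sum.reindex[OF i2, unfolded comp_def])
  finally show ?thesis .
qed

locale fock =
  fixes N :: nat and k1 k2 :: "nat \<Rightarrow> complex"
begin

definition op :: "bool \<Rightarrow> vec \<Rightarrow> vec" where
  "op c = Xop N (if c then k1 else k2) c"

definition opk :: "bool \<times> nat \<Rightarrow> vec \<Rightarrow> vec" where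
  "opk b = op (fst b) ^^ snd b"

fun ap :: "(bool \<times> nat) list \<Rightarrow> vec \<Rightarrow> vec" where
  "ap [] v = v"
| "ap (b # bs) v = opk b (ap bs v)"

definition phi :: "(bool \<times> nat) list \<Rightarrow> complex" where
  "phi w = ap w vac []"

definition lam :: "bool \<times> nat \<Rightarrow> complex" where
  "lam b = opk b vac []"

fun cv :: "(bool \<times> nat) list \<Rightarrow> vec" where
  "cv [] = vac"
| "cv (b # bs) = (\<lambda>w. opk b (cv bs) w - lam b * cv bs w)"

lemma lin_op: "lin (op c)" by (simp add: op_def lin_Xop)
lemma lin_opk: "lin (opk b)" by (simp add: opk_def lin_funpow lin_op)

lemma ap_append: "ap (xs @ ys) v = ap xs (ap ys v)"
  by (induction xs) auto

lemma ap_merge: "ap (merge_blocks w) v = ap w v"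
proof (induction w arbitrary: v rule: merge_blocks.induct)
  case 1 then show ?case by simp
next
  case (2 b k w)
  show ?case
  proof (cases "k = 0")
    case True then show ?thesis using 2(1)[OF True] by (simp add: opk_def)
  next
    case False
    note IH = 2(2)[OF False]
    show ?thesis
    proof (cases "merge_blocks w")
      case Nil then show ?thesis using False IH[of v] by simp
    next
      case (Cons x w')
      obtain c l where x: "x = (c, l)" by (cases x)
      show ?thesis
      proof (cases "c = b")
        case True
        have "ap (merge_blocks ((b, k) # w)) v = opk (b, k + l) (ap w' v)"
          using False Cons x True by simp
        also have "\<dots> = opk (b, k) (opk (b, l) (ap w' v))"
          by (simp add: opk_def funpow_add)
        also have "opk (b, l) (ap w' v) = ap w v" using IH[of v] Cons x True by simp
        finally show ?thesis by simp
      next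
        case c: False
        have "ap (merge_blocks ((b, k) # w)) v = opk (b, k) (ap (merge_blocks w) v)"
          using False Cons x c by simp
        then show ?thesis using IH[of v] by simp
      qed
    qed
  qed
qed

lemma cv_support:
  assumes "alt ((c, n) # bs)"
  shows "cv ((c, n) # bs) u \<noteq> 0 \<Longrightarrow> u \<noteq> [] \<and> hd u = c"
  using assms
proof (induction bs arbitrary: c n u)
  case Nil
  have hv: "vac u \<noteq> 0 \<Longrightarrow> headnot c u" for u by (simp add: vac_def split: if_splits)
  have "headnot c u \<Longrightarrow> cv [(c, n)] u = 0"
    using Xop_centered[where v=vac and c=c and w=u and N=N and k="if c then k1 else k2" and n=n] hv
    by (simp add: lam_def opk_def op_def)
  then show ?case using Nil by (auto simp: headnot_def)
next
  case (Cons b bs)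
  obtain c' n' where b: "b = (c', n')" by (cases b)
  have cc: "c' \<noteq> c" and a: "alt ((c', n') # bs)" using Cons.prems b by auto
  have hv: "cv (b # bs) u \<noteq> 0 \<Longrightarrow> headnot c u" for u
    using Cons.IH[OF _ a, of u] cc b by (auto simp: headnot_def)
  have "headnot c u \<Longrightarrow> cv ((c, n) # b # bs) u = 0"
    using Xop_centered[where v="cv (b # bs)" and c=c and w=u and N=N and k="if c then k1 else k2" and n=n] hv
    by (simp only: cv.simps(2)[of "(c, n)" "b # bs"]) (simp add: lam_def opk_def op_def del: cv.simps)
  then show ?case using Cons.prems by (auto simp: headnot_def)
qed

lemma cv_free: "alt bs \<Longrightarrow> bs \<noteq> [] \<Longrightarrow> cv bs [] = 0"
  using cv_support by (cases bs) fastforce+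

lemma cv_expand:
  "cv bs w = (\<Sum>S\<in>Pow {..<length bs}. (\<Prod>i\<in>{..<length bs} - S. - lam (bs ! i)) * ap (nths bs S) vac w)"
proof (induction bs arbitrary: w)
  case Nil then show ?case by simp
next
  case (Cons b bs)
  let ?n = "length bs"
  let ?c = "\<lambda>S. (\<Prod>i\<in>{..<?n} - S. - lam (bs ! i))"
  have IH: "cv bs = (\<lambda>w. \<Sum>S\<in>Pow {..<?n}. ?c S * ap (nths bs S) vac w)" using Cons by auto
  have L: "opk b (cv bs) = (\<lambda>w. \<Sum>S\<in>Pow {..<?n}. ?c S * opk b (ap (nths bs S) vac) w)"
    unfolding IH by (rule lin_sum_scale[OF lin_opk]) simp
  have "cv (b # bs) w = (\<Sum>S\<in>Pow {..<?n}. ?c S * opk b (ap (nths bs S) vac) w)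
                       - lam b * (\<Sum>S\<in>Pow {..<?n}. ?c S * ap (nths bs S) vac w)"
    unfolding cv.simps(2) L by (simp only: IH)
  also have "\<dots> = (\<Sum>S\<in>Pow {..<?n}. ?c S * ap (b # nths bs S) vac w)
                       + (\<Sum>S\<in>Pow {..<?n}. (- lam b * ?c S) * ap (nths bs S) vac w)"
    by (simp add: sum_distrib_left algebra_simps sum_negf)
  also have "\<dots> = (\<Sum>S\<in>Pow {..<Suc ?n}. (\<Prod>i\<in>{..<Suc ?n} - S. - lam ((b # bs) ! i)) * ap (nths (b # bs) S) vac w)"
  proof -
    have n1: "nths (b # bs) (Suc ` S) = nths bs S" for S
      by (simp add: nths_Cons image_iff)
    have n2: "nths (b # bs) (insert 0 (Suc ` S)) = b # nths bs S" for S
      by (simp add: nths_Cons image_iff)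
    have p1: "(\<Prod>i\<in>{..<Suc ?n} - Suc ` S. - lam ((b # bs) ! i)) = - lam b * ?c S" for S
    proof -
      have "{..<Suc ?n} - Suc ` S = insert 0 (Suc ` ({..<?n} - S))"
        by (auto simp: image_iff lessThan_Suc_eq_insert_0)
      then show ?thesis
        by (simp add: prod.reindex image_iff)
    qed
    have p2: "(\<Prod>i\<in>{..<Suc ?n} - insert 0 (Suc ` S). - lam ((b # bs) ! i)) = ?c S" for S
    proof -
      have "{..<Suc ?n} - insert 0 (Suc ` S) = Suc ` ({..<?n} - S)"
        by (auto simp: image_iff lessThan_Suc_eq_insert_0)
      then show ?thesis
        by (simp add: prod.reindex)
    qed
    show ?thesis
      by (simp only: pow_split n1 n2 p1 p2) (simp add: add.commute)
  qed
  finally show ?case by simp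
qed

theorem phi_free:
  assumes m1: "\<And>k. k \<le> N \<Longrightarrow> m1 k = phi [(True, k)]"
    and m2: "\<And>k. k \<le> N \<Longrightarrow> m2 k = phi [(False, k)]"
  shows "length w \<le> f \<Longrightarrow> sum_list (map snd w) \<le> N \<Longrightarrow> free_state_aux f m1 m2 w = phi w"
proof (induction f arbitrary: w)
  case 0
  then show ?case by (simp add: phi_def vac_def)
next
  case (Suc f)
  define v where "v = merge_blocks w"
  define n where "n = length v"
  have pv: "phi w = phi v" by (simp add: phi_def v_def ap_merge)
  have sv: "sum_list (map snd v) \<le> N" using Suc.prems sum_merge by (simp add: v_def)
  have lv: "n \<le> Suc f" using Suc.prems length_merge[of w] by (simp add: n_def v_def)
  show ?case
  proof (cases "n = 0")
    case True
    then show ?thesis using pv by (simp add: v_def n_def phi_def vac_def Let_def)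
  next
    case False
    let ?c = "\<lambda>S. (\<Prod>i\<in>{..<n} - S. - lam (v ! i))"
    let ?P = "Pow {..<n} - {{..<n}}"
    have fin: "finite (Pow {..<n})" by simp
    have "0 = cv v []" using cv_free[OF alt_merge[of w]] False by (simp add: v_def n_def)
    also have "\<dots> = (\<Sum>S\<in>Pow {..<n}. ?c S * phi (nths v S))"
      by (simp add: cv_expand phi_def n_def)
    also have "\<dots> = ?c {..<n} * phi (nths v {..<n}) + (\<Sum>S\<in>?P. ?c S * phi (nths v S))"
      by (subst sum.remove[OF fin, of "{..<n}"]) auto
    also have "?c {..<n} * phi (nths v {..<n}) = phi v"
      by (simp add: n_def nths_all)
    finally have e: "phi v = - (\<Sum>S\<in>?P. ?c S * phi (nths v S))" by (simp add: eq_neg_iff_add_eq_0 add.commute)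
    have blk: "block_mom m1 m2 (v ! i) = lam (v ! i)" if "i < n" for i
    proof -
      have "snd (v ! i) \<le> sum_list (map snd v)"
        using elem_le_sum_list[of i "map snd v"] that by (simp add: n_def)
      then have "snd (v ! i) \<le> N" using sv by simp
      then show ?thesis
        using m1 m2 by (cases "v ! i") (simp add: block_mom_def lam_def phi_def)
    qed
    have rec: "free_state_aux f m1 m2 (nths v S) = phi (nths v S)" if "S \<in> ?P" for S
    proof (rule Suc.IH)
      have "S \<subset> {..<n}" using that by auto
      then have "card S < n" by (metis card_lessThan finite_lessThan psubset_card_mono)
      moreover have "{i. i < n \<and> i \<in> S} = S" using that by auto
      ultimately show "length (nths v S) \<le> f" using lv by (simp add: length_nths n_def)
      show "sum_list (map snd (nths v S)) \<le> N" using sum_nths[of v S] sv by simp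
    qed
    have "free_state_aux (Suc f) m1 m2 w
        = - (\<Sum>S\<in>?P. (\<Prod>i\<in>{..<n} - S. - block_mom m1 m2 (v ! i)) * free_state_aux f m1 m2 (nths v S))"
      using False by (simp add: Let_def v_def n_def)
    also have "\<dots> = - (\<Sum>S\<in>?P. ?c S * phi (nths v S))"
      by (intro arg_cong[where f=uminus] sum.cong refl arg_cong2[where f="(*)"] prod.cong) (auto simp: blk rec)
    finally show ?thesis using e pv by simp
  qed
qed

end


context fock
begin

definition Tadd :: "vec \<Rightarrow> vec" where
  "Tadd v = (\<lambda>w. op True v w + op False v w)"

lemma bool_lists_Suc:
  "(\<Sum>x\<in>{x::bool list. length x = Suc n}. g x) = (\<Sum>x\<in>{x::bool list. length x = n}. g (True # x) + g (False # x))"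
proof -
  let ?A = "{x::bool list. length x = n}"
  have fin: "finite ?A" using finite_lists_length_eq[of "UNIV :: bool set" n] by simp
  have eq: "{x::bool list. length x = Suc n} = Cons True ` ?A \<union> Cons False ` ?A"
  proof (intro equalityI subsetI)
    fix x :: "bool list" assume "x \<in> {x. length x = Suc n}"
    then obtain b y where "x = b # y" "length y = n" by (cases x) auto
    then show "x \<in> Cons True ` ?A \<union> Cons False ` ?A" by (cases b) auto
  qed auto
  have "(\<Sum>x\<in>{x::bool list. length x = Suc n}. g x) = sum g (Cons True ` ?A) + sum g (Cons False ` ?A)"
    unfolding eq by (rule sum.union_disjoint) (use fin in auto)
  also have "\<dots> = (\<Sum>x\<in>?A. g (True # x)) + (\<Sum>x\<in>?A. g (False # x))"
    by (simp add: sum.reindex)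
  finally show ?thesis by (simp add: sum.distrib)
qed

lemma opk1: "opk (c, Suc 0) = op c" by (simp add: opk_def)

lemma add_expand:
  "(Tadd ^^ n) v w = (\<Sum>x\<in>{x::bool list. length x = n}. ap (map (\<lambda>b. (b, 1)) x) v w)"
proof (induction n arbitrary: w)
  case 0 then show ?case by simp
next
  case (Suc n)
  let ?A = "{x::bool list. length x = n}"
  have fin: "finite ?A" using finite_lists_length_eq[of "UNIV :: bool set" n] by simp
  have IH: "(Tadd ^^ n) v = (\<lambda>w. \<Sum>x\<in>?A. ap (map (\<lambda>b. (b, 1)) x) v w)" using Suc by auto
  have s: "op c ((Tadd ^^ n) v) = (\<lambda>w. \<Sum>x\<in>?A. op c (ap (map (\<lambda>b. (b, 1)) x) v) w)" for c
    unfolding IH by (rule lin_sum[OF lin_op fin])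
  have "(Tadd ^^ Suc n) v w = op True ((Tadd ^^ n) v) w + op False ((Tadd ^^ n) v) w"
    unfolding funpow.simps comp_def Tadd_def[of "(Tadd ^^ n) v"] ..
  then show ?case
    by (simp add: s bool_lists_Suc sum.distrib opk1)
qed

lemma mult_expand:
  "ap (concat (replicate n [(True, 1), (False, 1)])) v = ((\<lambda>u. op True (op False u)) ^^ n) v"
  by (induction n) (simp_all add: ap_append opk1)

end

lemma single_ansatz:
  assumes mu: "\<mu> \<in> Dist" and k1: "\<And>j. k1 j = R_transform \<mu> $ j" and nN: "n \<le> N"
  shows "(fock.op N k1 k2 True ^^ n) vac w = (if (\<forall>x\<in>set w. x) then Qs \<mu> (length w) $ n else 0)"
  using nN
proof (induction n arbitrary: w)
  case 0
  then show ?case using Qs0[OF mu] by (cases w) (auto simp: vac_def)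
next
  case (Suc n)
  let ?P = "(fock.op N k1 k2 True ^^ n) vac"
  have IH: "?P u = (if (\<forall>x\<in>set u. x) then Qs \<mu> (length u) $ n else 0)" for u
    using Suc by auto
  have nN: "n < N" using Suc by simp
  have "(fock.op N k1 k2 True ^^ Suc n) vac w = Xop N k1 True ?P w" by (simp add: fock.op_def)
  also have "\<dots> = (case w of [] \<Rightarrow> 0 | d # w' \<Rightarrow> if d = True then ?P w' else 0)
                 + (\<Sum>j<N. k1 (Suc j) * ?P (replicate j True @ w))"
    by (simp add: Xop_def)
  also have "\<dots> = (if (\<forall>x\<in>set w. x) then Qs \<mu> (length w) $ Suc n else 0)"
  proof (cases "\<forall>x\<in>set w. x")
    case True
    have c: "(case w of [] \<Rightarrow> 0 | d # w' \<Rightarrow> if d = True then ?P w' else 0)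
           = (if length w = 0 then 0 else Qs \<mu> (length w - 1) $ n)"
      using True by (cases w) (auto simp: IH)
    have s: "(\<Sum>j<N. k1 (Suc j) * ?P (replicate j True @ w)) = (\<Sum>j<N. R_transform \<mu> $ Suc j * Qs \<mu> (length w + j) $ n)"
      using True by (intro sum.cong refl) (auto simp: IH k1 add.commute)
    show ?thesis by (simp only: c s Qrec[OF mu nN] True[THEN eqTrueI] if_True)
  next
    case False
    have c: "(case w of [] \<Rightarrow> 0 | d # w' \<Rightarrow> if d = True then ?P w' else 0) = 0"
      using False by (cases w) (auto simp: IH)
    have s: "(\<Sum>j<N. k1 (Suc j) * ?P (replicate j True @ w)) = 0"
      using False by (intro sum.neutral) (auto simp: IH)
    show ?thesis by (simp only: c s False[THEN Eq_FalseI] if_False) simp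
  qed
  finally show ?case .
qed

lemma add_ansatz:
  assumes mu: "\<mu>0 \<in> Dist" and k: "\<And>j. k1 j + k2 j = R_transform \<mu>0 $ j" and nN: "n \<le> N"
  shows "(fock.Tadd N k1 k2 ^^ n) vac w = Qs \<mu>0 (length w) $ n"
  using nN
proof (induction n arbitrary: w)
  case 0
  then show ?case using Qs0[OF mu] by (cases w) (auto simp: vac_def)
next
  case (Suc n)
  let ?P = "(fock.Tadd N k1 k2 ^^ n) vac"
  have IH: "?P u = Qs \<mu>0 (length u) $ n" for u using Suc by auto
  have nN: "n < N" using Suc by simp
  have "(fock.Tadd N k1 k2 ^^ Suc n) vac w = Xop N k1 True ?P w + Xop N k2 False ?P w"
    by (simp add: fock.Tadd_def fock.op_def)
  also have "\<dots> = (case w of [] \<Rightarrow> 0 | d # w' \<Rightarrow> ?P w')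
                 + (\<Sum>j<N. (k1 (Suc j) + k2 (Suc j)) * Qs \<mu>0 (length w + j) $ n)"
    by (cases w) (auto simp: Xop_def IH sum.distrib algebra_simps)
  also have "\<dots> = Qs \<mu>0 (length w) $ Suc n"
    by (cases w) (simp_all add: Qrec[OF mu nN] k IH)
  finally show ?case .
qed


locale mulsys = fock N k1 k2 for N k1 k2 +
  fixes m \<alpha> \<beta> y v :: "complex fps"
  assumes m0: "m $ 0 = 1"
    and y0: "y $ 0 = 0"
    and yd: "y = m * \<beta>"
    and vd: "v = m * \<alpha>"
    and mrel: "m = 1 + m * \<alpha> * \<beta>"
    and ad: "\<alpha> = Abs_fps (\<lambda>j. k1 (Suc j)) oo y"
    and bd: "\<beta> = fps_X * (Abs_fps (\<lambda>j. k2 (Suc j)) oo (fps_X * v))"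
begin

definition Ee :: "bool \<Rightarrow> bool \<Rightarrow> complex fps" where
  "Ee p q = (if p = q then m else if p then y else v)"

fun Gf :: "bool list \<Rightarrow> bool \<Rightarrow> complex fps" where
  "Gf [] f = Ee True f"
| "Gf (c # w) f = Gf w (\<not> c) * (if c then 1 else fps_X) * Ee c f"

lemma Gf0: "Gf w False $ 0 = 0 \<and> Gf w True $ 0 = (if w = [] then 1 else 0)"
proof (induction w)
  case Nil then show ?case by (simp add: Ee_def m0 y0)
next
  case (Cons c w)
  then show ?case by (cases c) (simp_all add: Ee_def)
qed

lemma mrel0: "m - (1 + m * \<alpha> * \<beta>) = 0"
  by (subst mrel[symmetric]) simp

lemma I1: "Gf w True = (if w = [] then 1 else 0) + (case w of [] \<Rightarrow> 0 | d # w' \<Rightarrow> if d then Gf w' False else 0) + Gf w False * \<alpha>"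
proof -
  have r: "g * m = g + g * y * \<alpha>" for g
  proof -
    have "g * m - (g + g * y * \<alpha>) = g * (m - (1 + m * \<alpha> * \<beta>))" by (simp add: yd algebra_simps)
    also have "\<dots> = 0" by (simp only: mrel0 mult_zero_right)
    finally show ?thesis by (simp only: right_minus_eq)
  qed
  have r2: "g * fps_X * v = g * fps_X * m * \<alpha>" for g using vd by (simp add: algebra_simps)
  show ?thesis
  proof (cases w)
    case Nil
    have a: "Gf w True = 1 * m" "Gf w False = y" using Nil by (simp_all add: Ee_def)
    show ?thesis unfolding a using Nil r[of 1] by simp
  next
    case (Cons d w')
    then show ?thesis
    proof (cases d)
      case True
      have a: "Gf w True = Gf w' False * m" "Gf w False = Gf w' False * y" using Cons True by (simp_all add: Ee_def)
      show ?thesis unfolding a using Cons True r[of "Gf w' False"] by simp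
    next
      case False
      have a: "Gf w True = Gf w' True * fps_X * v" "Gf w False = Gf w' True * fps_X * m" using Cons False by (simp_all add: Ee_def)
      show ?thesis unfolding a using Cons False r2[of "Gf w' True"] by simp
    qed
  qed
qed

lemma I2: "Gf w False = fps_X * (case w of [] \<Rightarrow> 0 | d # w' \<Rightarrow> if d then 0 else Gf w' True) + Gf w True * \<beta>"
proof -
  have r: "g * fps_X * m = fps_X * g + g * fps_X * v * \<beta>" for g
  proof -
    have "g * fps_X * m - (fps_X * g + g * fps_X * v * \<beta>) = g * fps_X * (m - (1 + m * \<alpha> * \<beta>))" by (simp add: vd algebra_simps)
    also have "\<dots> = 0" by (simp only: mrel0 mult_zero_right)
    finally show ?thesis by (simp only: right_minus_eq)
  qed
  have r2: "g * y = g * m * \<beta>" for g using yd by (simp add: algebra_simps)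
  show ?thesis
  proof (cases w)
    case Nil
    have a: "Gf w True = m" "Gf w False = 1 * y" using Nil by (simp_all add: Ee_def)
    show ?thesis unfolding a using Nil r2[of 1] by simp
  next
    case (Cons d w')
    then show ?thesis
    proof (cases d)
      case True
      have a: "Gf w True = Gf w' False * m" "Gf w False = Gf w' False * y" using Cons True by (simp_all add: Ee_def)
      show ?thesis unfolding a using Cons True r2[of "Gf w' False"] by simp
    next
      case False
      have a: "Gf w True = Gf w' True * fps_X * v" "Gf w False = Gf w' True * fps_X * m" using Cons False by (simp_all add: Ee_def)
      show ?thesis unfolding a using Cons False r[of "Gf w' True"] by (simp add: mult.assoc)
    qed
  qed
qed

lemma Gf_repT: "Gf (replicate j True @ w) False = Gf w False * y ^ j"
  by (induction j) (simp_all add: Ee_def algebra_simps)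

lemma Gf_repF: "Gf (replicate j False @ w) True = Gf w True * (fps_X * v) ^ j"
  by (induction j) (simp_all add: Ee_def algebra_simps)

lemma op_apply: "op c u w = (case w of [] \<Rightarrow> 0 | d # w' \<Rightarrow> if d = c then u w' else 0)
    + (\<Sum>j<N. (if c then k1 else k2) (Suc j) * u (replicate j c @ w))"
  by (simp add: op_def Xop_def)

lemma Xv0: "(fps_X * v) $ 0 = 0" by simp

lemma mult_ansatz:
  "n < N \<Longrightarrow> ((\<lambda>u. op True (op False u)) ^^ n) vac w = Gf w True $ n"
proof (induction n arbitrary: w)
  case 0
  then show ?case using Gf0[of w] by (simp add: vac_def)
next
  case (Suc n)
  let ?P = "((\<lambda>u. op True (op False u)) ^^ n) vac"
  have IH: "?P u = Gf u True $ n" for u using Suc by simp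
  have nN: "n < N" and sN: "Suc n < N" using Suc by auto
  define Q where "Q = op False ?P"
  have Q: "Q u = Gf u False $ Suc n" for u
  proof -
    have "Q u = (case u of [] \<Rightarrow> 0 | d # w' \<Rightarrow> if d = False then ?P w' else 0)
                 + (\<Sum>j<N. k2 (Suc j) * ?P (replicate j False @ u))"
      unfolding Q_def op_apply by simp
    also have "(\<Sum>j<N. k2 (Suc j) * ?P (replicate j False @ u))
        = (\<Sum>j<N. Abs_fps (\<lambda>j. k2 (Suc j)) $ j * (Gf u True * (fps_X * v) ^ j) $ n)"
      by (simp add: IH Gf_repF)
    also have "\<dots> = (Gf u True * (Abs_fps (\<lambda>j. k2 (Suc j)) oo (fps_X * v))) $ n"
      by (rule trunc_sum[symmetric]) (simp_all add: nN)
    also have "\<dots> = (Gf u True * \<beta>) $ Suc n"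
      by (simp add: bd mult.left_commute[of _ fps_X])
    also have "(case u of [] \<Rightarrow> 0 | d # w' \<Rightarrow> if d = False then ?P w' else 0)
       = (fps_X * (case u of [] \<Rightarrow> 0 | d # w' \<Rightarrow> if d then 0 else Gf w' True)) $ Suc n"
      by (cases u) (auto simp: IH)
    finally show ?thesis by (subst I2) simp
  qed
  have "((\<lambda>u. op True (op False u)) ^^ Suc n) vac w = op True Q w" by (simp add: Q_def)
  also have "\<dots> = (case w of [] \<Rightarrow> 0 | d # w' \<Rightarrow> if d = True then Q w' else 0)
                 + (\<Sum>j<N. k1 (Suc j) * Q (replicate j True @ w))"
    unfolding op_apply by simp
  also have "(\<Sum>j<N. k1 (Suc j) * Q (replicate j True @ w))
        = (\<Sum>j<N. Abs_fps (\<lambda>j. k1 (Suc j)) $ j * (Gf w False * y ^ j) $ Suc n)"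
    by (simp add: Q Gf_repT)
  also have "\<dots> = (Gf w False * \<alpha>) $ Suc n"
    unfolding ad by (rule trunc_sum[symmetric]) (simp_all add: y0 sN)
  also have "(case w of [] \<Rightarrow> 0 | d # w' \<Rightarrow> if d = True then Q w' else 0)
       = (case w of [] \<Rightarrow> 0 | d # w' \<Rightarrow> if d then Gf w' False else 0) $ Suc n"
    by (cases w) (auto simp: Q)
  finally show ?case by (subst I1) simp
qed

end


lemma single_ansatzF:
  assumes mu: "\<mu> \<in> Dist" and k2: "\<And>j. k2 j = R_transform \<mu> $ j" and nN: "n \<le> N"
  shows "(fock.op N k1 k2 False ^^ n) vac w = (if (\<forall>x\<in>set w. \<not> x) then Qs \<mu> (length w) $ n else 0)"
  using nN
proof (induction n arbitrary: w)
  case 0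
  then show ?case using Qs0[OF mu] by (cases w) (auto simp: vac_def)
next
  case (Suc n)
  let ?P = "(fock.op N k1 k2 False ^^ n) vac"
  have IH: "?P u = (if (\<forall>x\<in>set u. \<not> x) then Qs \<mu> (length u) $ n else 0)" for u
    using Suc by auto
  have nN: "n < N" using Suc by simp
  have "(fock.op N k1 k2 False ^^ Suc n) vac w = Xop N k2 False ?P w" by (simp add: fock.op_def)
  also have "\<dots> = (case w of [] \<Rightarrow> 0 | d # w' \<Rightarrow> if d = False then ?P w' else 0)
                 + (\<Sum>j<N. k2 (Suc j) * ?P (replicate j False @ w))"
    by (simp add: Xop_def)
  also have "\<dots> = (if (\<forall>x\<in>set w. \<not> x) then Qs \<mu> (length w) $ Suc n else 0)"
  proof (cases "\<forall>x\<in>set w. \<not> x")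
    case True
    have c: "(case w of [] \<Rightarrow> 0 | d # w' \<Rightarrow> if d = False then ?P w' else 0)
           = (if length w = 0 then 0 else Qs \<mu> (length w - 1) $ n)"
      using True by (cases w) (auto simp: IH)
    have s: "(\<Sum>j<N. k2 (Suc j) * ?P (replicate j False @ w)) = (\<Sum>j<N. R_transform \<mu> $ Suc j * Qs \<mu> (length w + j) $ n)"
      using True by (intro sum.cong refl) (auto simp: IH k2 add.commute)
    show ?thesis by (simp only: c s Qrec[OF mu nN] True[THEN eqTrueI] if_True)
  next
    case False
    have c: "(case w of [] \<Rightarrow> 0 | d # w' \<Rightarrow> if d = False then ?P w' else 0) = 0"
      using False by (cases w) (auto simp: IH)
    have s: "(\<Sum>j<N. k2 (Suc j) * ?P (replicate j False @ w)) = 0"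
      using False by (intro sum.neutral) (auto simp: IH)
    show ?thesis by (simp only: c s False[THEN Eq_FalseI] if_False) simp
  qed
  finally show ?case .
qed

lemma Mser_ms: "\<mu> \<in> Dist \<Longrightarrow> Mser \<mu> = 1 + moment_series \<mu>"
  by (intro fps_ext) (simp add: Mser_def ms_nth Dist_mom0)

lemma Qs_zero: "Qs \<mu> 0 = Mser \<mu>" by (simp add: Qs_def)

lemma sub_props:
  assumes a: "\<mu> \<in> Dist1x" and b: "\<nu> \<in> Dist1x" and z: "\<mu>0 \<in> Dist1x"
    and S: "S_transform \<mu>0 = S_transform \<mu> * S_transform \<nu>"
  defines "\<omega>1 \<equiv> fps_inv (moment_series \<mu>) oo moment_series \<mu>0"
    and "\<omega>2 \<equiv> fps_inv (moment_series \<nu>) oo moment_series \<mu>0"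
  shows "\<omega>1 $ 0 = 0" "\<omega>1 $ Suc 0 = 1" "\<omega>2 $ 0 = 0" "\<omega>2 $ Suc 0 = 1"
    "moment_series \<mu> oo \<omega>1 = moment_series \<mu>0" "moment_series \<nu> oo \<omega>2 = moment_series \<mu>0"
    "\<omega>1 * \<omega>2 * (1 + moment_series \<mu>0) = fps_X * moment_series \<mu>0"
proof -
  let ?a = "moment_series \<mu>" and ?b = "moment_series \<nu>" and ?z = "moment_series \<mu>0"
  have z1: "?z $ Suc 0 = 1" using ms1[OF z] .
  show "\<omega>1 $ 0 = 0" "\<omega>2 $ 0 = 0" by (simp_all add: \<omega>1_def \<omega>2_def)
  show "\<omega>1 $ Suc 0 = 1" using ms1[OF a] z1
    by (simp add: \<omega>1_def fps_compose_nth fps_inv_nthS numeral_2_eq_2 atLeast0_atMost_Suc)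
  show "\<omega>2 $ Suc 0 = 1" using ms1[OF b] z1
    by (simp add: \<omega>2_def fps_compose_nth fps_inv_nthS numeral_2_eq_2 atLeast0_atMost_Suc)
  have inva: "?a oo fps_inv ?a = fps_X" by (rule fps_inv_right) (simp_all add: ms1[OF a])
  have invb: "?b oo fps_inv ?b = fps_X" by (rule fps_inv_right) (simp_all add: ms1[OF b])
  show "?a oo \<omega>1 = ?z"
    unfolding \<omega>1_def by (simp add: fps_compose_assoc inva)
  show "?b oo \<omega>2 = ?z"
    unfolding \<omega>2_def by (simp add: fps_compose_assoc invb)
  let ?Ia = "fps_inv ?a" and ?Ib = "fps_inv ?b" and ?Iz = "fps_inv ?z"
  have "(fps_X * S_transform \<mu>0) * fps_X = (fps_X * S_transform \<mu>) * (fps_X * S_transform \<nu>)"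
    using S by (simp add: algebra_simps)
  then have "(1 + fps_X) * ?Iz * fps_X = ((1 + fps_X) * ?Ia) * ((1 + fps_X) * ?Ib)"
    by (simp only: S_X[OF a] S_X[OF b] S_X[OF z])
  then have "(1 + fps_X) * (fps_X * ?Iz) = (1 + fps_X) * ((1 + fps_X) * ?Ia * ?Ib)"
    by (simp add: algebra_simps)
  then have e: "fps_X * ?Iz = (1 + fps_X) * ?Ia * ?Ib" using onepX_nz by (metis mult_left_cancel)
  have Iz: "?Iz oo ?z = fps_X" by (rule fps_inv) (simp_all add: z1)
  have "(fps_X * ?Iz) oo ?z = ((1 + fps_X) * ?Ia * ?Ib) oo ?z" using e by simp
  then show "\<omega>1 * \<omega>2 * (1 + ?z) = fps_X * ?z"
    by (simp add: fps_compose_mult_distrib fps_compose_add_distrib Iz \<omega>1_def \<omega>2_def algebra_simps)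
qed


lemma sum_concat_rep: "sum_list (map snd (concat (replicate n [(True, 1::nat), (False, 1)]))) = 2 * n"
  by (induction n) auto

lemma Mser_nth: "Mser \<mu> $ k = mom \<mu> k" by (simp add: Mser_def)

lemma moms_single:
  assumes a: "\<mu> \<in> Dist" and b: "\<nu> \<in> Dist"
  shows "\<And>k. k \<le> N \<Longrightarrow> mom \<mu> k = fock.phi N (($) (R_transform \<mu>)) (($) (R_transform \<nu>)) [(True, k)]"
    and "\<And>k. k \<le> N \<Longrightarrow> mom \<nu> k = fock.phi N (($) (R_transform \<mu>)) (($) (R_transform \<nu>)) [(False, k)]"
proof -
  fix k assume k: "k \<le> N"
  show "mom \<mu> k = fock.phi N (($) (R_transform \<mu>)) (($) (R_transform \<nu>)) [(True, k)]"
    using single_ansatz[OF a _ k, of "($) (R_transform \<mu>)" "($) (R_transform \<nu>)" "[]"]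
    by (simp add: fock.phi_def fock.opk_def fock.ap.simps Qs_zero Mser_nth)
  show "mom \<nu> k = fock.phi N (($) (R_transform \<mu>)) (($) (R_transform \<nu>)) [(False, k)]"
    using single_ansatzF[OF b _ k, of "($) (R_transform \<nu>)" "($) (R_transform \<mu>)" "[]"]
    by (simp add: fock.phi_def fock.opk_def fock.ap.simps Qs_zero Mser_nth)
qed

lemma add_main:
  assumes a: "\<mu> \<in> Dist" and b: "\<nu> \<in> Dist" and z: "\<mu>0 \<in> Dist"
    and R: "R_transform \<mu>0 = R_transform \<mu> + R_transform \<nu>"
  shows "free_add_conv \<mu> \<nu> = \<mu>0"
proof -
  have "(\<Sum>w \<in> {w :: bool list. length w = n}. free_state (mom \<mu>) (mom \<nu>) (map (\<lambda>b. (b, 1)) w)) = mom \<mu>0 n" for n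
  proof -
    define N where "N = Suc n"
    define k1 where "k1 = ($) (R_transform \<mu>)"
    define k2 where "k2 = ($) (R_transform \<nu>)"
    interpret fock N k1 k2 .
    have fs: "free_state (mom \<mu>) (mom \<nu>) (map (\<lambda>b. (b, 1)) w) = phi (map (\<lambda>b. (b, 1)) w)"
      if "length w = n" for w :: "bool list"
    proof -
      have "sum_list (map snd (map (\<lambda>b. (b, 1::nat)) w)) = length w" by (induction w) auto
      then have "sum_list (map snd (map (\<lambda>b. (b, 1::nat)) w)) = n" using that by simp
      then show ?thesis unfolding free_state_def
        by (intro phi_free) (use moms_single[OF a b] in \<open>simp_all add: k1_def k2_def N_def\<close>)
    qed
    have "(\<Sum>w \<in> {w :: bool list. length w = n}. free_state (mom \<mu>) (mom \<nu>) (map (\<lambda>b. (b, 1)) w))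
        = (\<Sum>w \<in> {w :: bool list. length w = n}. ap (map (\<lambda>b. (b, 1)) w) vac [])"
    proof (rule sum.cong[OF refl])
      fix w assume "w \<in> {w :: bool list. length w = n}"
      then show "free_state (mom \<mu>) (mom \<nu>) (map (\<lambda>b. (b, 1)) w) = ap (map (\<lambda>b. (b, 1)) w) vac []"
        using fs[of w] by (simp add: phi_def)
    qed
    also have "\<dots> = (Tadd ^^ n) vac []" by (simp add: add_expand)
    also have "\<dots> = Qs \<mu>0 0 $ n"
      using add_ansatz[OF z, of k1 k2 n N "[]"] R by (simp add: k1_def k2_def N_def Tadd_def)
    finally show ?thesis by (simp add: Qs_zero Mser_nth)
  qed
  then have "free_add_conv \<mu> \<nu> = functional_of_moments (mom \<mu>0)"
    unfolding free_add_conv_def by presburger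
  then show ?thesis using Dist_fom[OF z] by simp
qed


lemma shift_abs: "Abs_fps (\<lambda>j. f $ Suc j) = fps_shift 1 f"
  by (intro fps_ext) simp

lemma cancel_nz: "(a::complex fps) $ 0 \<noteq> 0 \<Longrightarrow> a * b = a * c \<Longrightarrow> b = c"
proof -
  assume "a $ 0 \<noteq> 0" "a * b = a * c"
  then have "a \<noteq> 0" by auto
  with \<open>a * b = a * c\<close> show "b = c" by simp
qed

lemma cancel_nz1: "(a::complex fps) $ Suc 0 \<noteq> 0 \<Longrightarrow> a * b = a * c \<Longrightarrow> b = c"
proof -
  assume "a $ Suc 0 \<noteq> 0" "a * b = a * c"
  then have "a \<noteq> 0" by auto
  with \<open>a * b = a * c\<close> show "b = c" by simp
qed

lemma mult_main:
  assumes a: "\<mu> \<in> Dist1x" and b: "\<nu> \<in> Dist1x" and z: "\<mu>0 \<in> Dist1x"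
    and S: "S_transform \<mu>0 = S_transform \<mu> * S_transform \<nu>"
  shows "free_mult_conv \<mu> \<nu> = \<mu>0"
proof -
  have aD: "\<mu> \<in> Dist" and bD: "\<nu> \<in> Dist" and zD: "\<mu>0 \<in> Dist" using a b z Dist1x_D by auto
  define \<omega>1 where "\<omega>1 = fps_inv (moment_series \<mu>) oo moment_series \<mu>0"
  define \<omega>2 where "\<omega>2 = fps_inv (moment_series \<nu>) oo moment_series \<mu>0"
  note sp = sub_props[OF a b z S, folded \<omega>1_def \<omega>2_def]
  define m where "m = Mser \<mu>0"
  define \<beta> where "\<beta> = \<omega>1"
  define \<alpha> where "\<alpha> = fps_shift 1 \<omega>2"
  define y where "y = m * \<beta>"
  define v where "v = m * \<alpha>"
  let ?Ra = "R_transform \<mu>" and ?Rb = "R_transform \<nu>"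
  have m0: "m $ 0 = 1" by (simp add: m_def Mser0[OF zD])
  have mz: "m = 1 + moment_series \<mu>0" by (simp add: m_def Mser_ms[OF zD])
  have w2: "\<omega>2 = fps_X * \<alpha>" unfolding \<alpha>_def by (rule Xshift[symmetric]) (simp add: sp)
  have mrel: "m = 1 + m * \<alpha> * \<beta>"
  proof -
    have "fps_X * (m * \<alpha> * \<beta>) = fps_X * (m - 1)"
      using sp(7) by (simp add: w2 \<beta>_def mz algebra_simps)
    then have "m * \<alpha> * \<beta> = m - 1" by simp
    then show ?thesis by simp
  qed
  have mab: "m * \<alpha> * \<beta> = m - 1" using mrel by (metis add_diff_cancel_left')
  have y0: "y $ 0 = 0" by (simp add: y_def \<beta>_def sp)
  have y1: "y $ Suc 0 = 1" by (simp add: y_def \<beta>_def fps_mult_nth sp m0 atLeast0_atMost_Suc)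
  have v0: "v $ 0 = 1" using sp(4) by (simp add: v_def \<alpha>_def m0)
  have Hy: "Hs \<mu> oo \<omega>1 = y"
  proof -
    have "Hs \<mu> oo \<omega>1 = \<omega>1 * (1 + (moment_series \<mu> oo \<omega>1))"
      by (simp add: Hs_def Mser_ms[OF aD] fps_compose_mult_distrib fps_compose_add_distrib sp)
    then show ?thesis by (simp add: sp y_def \<beta>_def mz mult.commute)
  qed
  have Hv: "Hs \<nu> oo \<omega>2 = fps_X * v"
  proof -
    have "Hs \<nu> oo \<omega>2 = \<omega>2 * (1 + (moment_series \<nu> oo \<omega>2))"
      by (simp add: Hs_def Mser_ms[OF bD] fps_compose_mult_distrib fps_compose_add_distrib sp)
    then show ?thesis by (simp only: sp(6)) (simp add: v_def w2 mz algebra_simps)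
  qed
  have Ra_y: "?Ra oo y = m - 1"
  proof -
    have "?Ra oo y = (?Ra oo Hs \<mu>) oo \<omega>1" unfolding Hy[symmetric]
      by (rule fps_compose_assoc) (simp_all add: sp)
    also have "\<dots> = m - 1" by (simp add: R_basic(1)[OF aD] Mser_ms[OF aD] fps_compose_sub_distrib mz sp)
    finally show ?thesis .
  qed
  have Rb_v: "?Rb oo (fps_X * v) = m - 1"
  proof -
    have "?Rb oo (fps_X * v) = (?Rb oo Hs \<nu>) oo \<omega>2" unfolding Hv[symmetric]
      by (rule fps_compose_assoc) (simp_all add: sp)
    also have "\<dots> = m - 1" by (simp add: R_basic(1)[OF bD] Mser_ms[OF bD] fps_compose_sub_distrib mz sp)
    finally show ?thesis .
  qed
  have Ra: "?Ra = fps_X * fps_shift 1 ?Ra" by (rule Xshift[symmetric]) (simp add: R_basic(2)[OF aD])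
  have Rb: "?Rb = fps_X * fps_shift 1 ?Rb" by (rule Xshift[symmetric]) (simp add: R_basic(2)[OF bD])
  have ad: "\<alpha> = Abs_fps (\<lambda>j. ?Ra $ Suc j) oo y"
  proof -
    have "y * (fps_shift 1 ?Ra oo y) = ?Ra oo y"
      by (subst (2) Ra) (simp add: fps_compose_mult_distrib y0)
    also have "\<dots> = m - 1" by (rule Ra_y)
    also have "\<dots> = m * \<alpha> * \<beta>" by (rule mab[symmetric])
    also have "\<dots> = y * \<alpha>" by (simp add: y_def algebra_simps)
    finally have "y * (fps_shift 1 ?Ra oo y) = y * \<alpha>" .
    then have "fps_shift 1 ?Ra oo y = \<alpha>" by (rule cancel_nz1[of y, rotated]) (simp add: y1)
    then show ?thesis by (simp add: shift_abs)
  qed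
  have bd: "\<beta> = fps_X * (Abs_fps (\<lambda>j. ?Rb $ Suc j) oo (fps_X * v))"
  proof -
    have "v * (fps_X * (fps_shift 1 ?Rb oo (fps_X * v))) = ?Rb oo (fps_X * v)"
      by (subst (2) Rb) (simp add: fps_compose_mult_distrib algebra_simps)
    also have "\<dots> = m - 1" by (rule Rb_v)
    also have "\<dots> = m * \<alpha> * \<beta>" by (rule mab[symmetric])
    also have "\<dots> = v * \<beta>" by (simp add: v_def algebra_simps)
    finally have "v * (fps_X * (fps_shift 1 ?Rb oo (fps_X * v))) = v * \<beta>" .
    then have "fps_X * (fps_shift 1 ?Rb oo (fps_X * v)) = \<beta>" by (rule cancel_nz[of v, rotated]) (simp add: v0)
    then show ?thesis by (simp add: shift_abs)
  qed
  have "free_state (mom \<mu>) (mom \<nu>) (concat (replicate n [(True, 1), (False, 1)])) = mom \<mu>0 n" for n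
  proof -
    define N where "N = 2 * n + 3"
    define k1 where "k1 = ($) ?Ra"
    define k2 where "k2 = ($) ?Rb"
    interpret mulsys N k1 k2 m \<alpha> \<beta> y v
    proof unfold_locales
      show "m $ 0 = 1" by (rule m0)
      show "y $ 0 = 0" by (rule y0)
      show "y = m * \<beta>" by (rule y_def)
      show "v = m * \<alpha>" by (rule v_def)
      show "m = 1 + m * \<alpha> * \<beta>" by (rule mrel)
      show "\<alpha> = Abs_fps (\<lambda>j. k1 (Suc j)) oo y" using ad by (simp only: k1_def)
      show "\<beta> = fps_X * (Abs_fps (\<lambda>j. k2 (Suc j)) oo (fps_X * v))" using bd by (simp only: k2_def)
    qed
    let ?w = "concat (replicate n [(True, 1::nat), (False, 1)])"
    have "free_state (mom \<mu>) (mom \<nu>) ?w = phi ?w" unfolding free_state_def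
      by (intro phi_free) (use moms_single[OF aD bD] in \<open>simp_all add: k1_def k2_def N_def sum_concat_rep[simplified]\<close>)
    also have "\<dots> = ((\<lambda>u. op True (op False u)) ^^ n) vac []" by (simp add: phi_def mult_expand[simplified])
    also have "\<dots> = Gf [] True $ n" by (rule mult_ansatz) (simp add: N_def)
    also have "\<dots> = mom \<mu>0 n" by (simp add: Ee_def) (simp add: m_def Mser_nth)
    finally show ?thesis .
  qed
  then have "free_mult_conv \<mu> \<nu> = functional_of_moments (mom \<mu>0)"
    unfolding free_mult_conv_def by presburger
  then show ?thesis using Dist_fom[OF zD] by simp
qed


lemma LOG_props:
  assumes "\<mu> \<in> Dist1x"
  shows "LOG \<mu> \<in> Dist" "R_transform (LOG \<mu>) = zdlog (S_transform \<mu>)"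
proof -
  have img: "zdlog (S_transform \<mu>) \<in> R_transform ` Dist"
    using R_surj[OF zd0[of "S_transform \<mu>"]] by (metis image_eqI)
  show "LOG \<mu> \<in> Dist" unfolding LOG_def by (rule the_inv_into_into[OF R_inj img]) simp
  show "R_transform (LOG \<mu>) = zdlog (S_transform \<mu>)" unfolding LOG_def by (rule f_the_inv_into_f[OF R_inj img])
qed

theorem mainTheorem2:
  shows "inj_on R_transform Dist
    \<and> (\<forall>\<mu> \<in> Dist1x. zdlog (S_transform \<mu>) \<in> R_transform ` Dist)
    \<and> bij_betw LOG Dist1x Dist
    \<and> (\<forall>\<mu> \<in> Dist1x. \<forall>\<nu> \<in> Dist1x. LOG (free_mult_conv \<mu> \<nu>) = free_add_conv (LOG \<mu>) (LOG \<nu>))"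
proof (intro conjI ballI)
  show "inj_on R_transform Dist" by (rule R_inj)
  show "zdlog (S_transform \<mu>) \<in> R_transform ` Dist" if "\<mu> \<in> Dist1x" for \<mu>
    using R_surj[OF zd0[of "S_transform \<mu>"]] by (metis image_eqI)
  show "bij_betw LOG Dist1x Dist"
  proof (rule bij_betw_imageI)
    show "inj_on LOG Dist1x"
    proof (rule inj_onI)
      fix \<mu> \<nu> assume m: "\<mu> \<in> Dist1x" and n: "\<nu> \<in> Dist1x" and e: "LOG \<mu> = LOG \<nu>"
      then have "zdlog (S_transform \<mu>) = zdlog (S_transform \<nu>)" using LOG_props by metis
      then have "S_transform \<mu> = S_transform \<nu>" using zd_inj S0 m n by blast
      then show "\<mu> = \<nu>" using S_inj m n by (meson inj_onD)
    qed
    show "LOG ` Dist1x = Dist"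
    proof (intro equalityI subsetI)
      fix \<rho> assume "\<rho> \<in> LOG ` Dist1x"
      then show "\<rho> \<in> Dist" using LOG_props by auto
    next
      fix \<rho> assume r: "\<rho> \<in> Dist"
      obtain f where f: "f $ 0 = 1" "zdlog f = R_transform \<rho>" using zd_surj[OF R_basic(2)[OF r]] by blast
      obtain \<mu> where m: "\<mu> \<in> Dist1x" "S_transform \<mu> = f" using S_surj[OF f(1)] by blast
      have "R_transform (LOG \<mu>) = R_transform \<rho>" using LOG_props(2)[OF m(1)] m f by simp
      then have "LOG \<mu> = \<rho>" using R_inj LOG_props(1)[OF m(1)] r by (meson inj_onD)
      then show "\<rho> \<in> LOG ` Dist1x" using m by blast
    qed
  qed
  fix \<mu> \<nu> assume m: "\<mu> \<in> Dist1x" and n: "\<nu> \<in> Dist1x"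
  have s0: "(S_transform \<mu> * S_transform \<nu>) $ 0 = 1" using S0 m n by simp
  obtain \<mu>0 where z: "\<mu>0 \<in> Dist1x" "S_transform \<mu>0 = S_transform \<mu> * S_transform \<nu>"
    using S_surj[OF s0] by blast
  have fm: "free_mult_conv \<mu> \<nu> = \<mu>0" by (rule mult_main[OF m n z])
  have "R_transform (LOG \<mu>0) = zdlog (S_transform \<mu> * S_transform \<nu>)" using LOG_props(2)[OF z(1)] z(2) by simp
  also have "\<dots> = zdlog (S_transform \<mu>) + zdlog (S_transform \<nu>)" using S0 m n by (intro zd_mult) simp_all
  also have "\<dots> = R_transform (LOG \<mu>) + R_transform (LOG \<nu>)" using LOG_props(2) m n by simp
  finally have "free_add_conv (LOG \<mu>) (LOG \<nu>) = LOG \<mu>0"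
    by (intro add_main LOG_props(1) m n z(1))
  then show "LOG (free_mult_conv \<mu> \<nu>) = free_add_conv (LOG \<mu>) (LOG \<nu>)" using fm by simp
qed


end
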